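(* Let $E: y^2=x^3+Ax+B$ ($A,B\in\mathbb{Z}$) be an elliptic curve over $\mathbb{Q}$. There exists $D_0$ depending only on $E$ such that for every squarefree $D\ge D_0$ the following holds, where $E_D: y^2=x^3+D^2Ax+D^3B$: if $P,Q\in E_D(\mathbb{Z})$ satisfy $20\log D\le \hat h(P),\hat h(Q)\le 2200\log D$, $x(P)\ne x(Q)$, and \[\max\left\{\frac{\hat h(Q)}{\hat h(P)},\frac{\hat h(P)}{\hat h(Q)}\right\}\le 1.1,\] then $\cos\theta_{P,Q}\le 0.63$.
   Context: $h$ is the absolute logarithmic Weil height on $\overline{\mathbb{Q}}$; for a point $P$ on an elliptic curve in Weierstrass form, $\hat h(P)=\lim_{n\to\infty} h(x(2^nP))/4^n$ (the canonical height, not normalized by the factor $1/2$). $E_D(\mathbb{Z})$ is the set of points of $E_D$ with integer coordinates. For non-torsion $P,Q$, $\cos\theta_{P,Q}:=\dfrac{\hat h(P+Q)-\hat h(P)-\hat h(Q)}{2\sqrt{\hat h(P)\hat h(Q)}}$. *)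

theory Defs
  imports "HOL-Computational_Algebra.Squarefree" Complex_Main
begin

datatype ept = Inf | Pt rat rat

fun on_curve :: "rat \<Rightarrow> rat \<Rightarrow> ept \<Rightarrow> bool" where
  "on_curve a b Inf = True"
| "on_curve a b (Pt x y) = (y^2 = x^3 + a * x + b)"

fun ec_add :: "rat \<Rightarrow> rat \<Rightarrow> ept \<Rightarrow> ept \<Rightarrow> ept" where
  "ec_add a b Inf Q = Q"
| "ec_add a b (Pt x1 y1) Inf = Pt x1 y1"
| "ec_add a b (Pt x1 y1) (Pt x2 y2) =
     (if x1 = x2 \<and> y1 = - y2 then Inf
      else let l = (if x1 = x2 then (3 * x1^2 + a) / (2 * y1) else (y2 - y1) / (x2 - x1));
               x3 = l^2 - x1 - x2;
               y3 = l * (x1 - x3) - y1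
           in Pt x3 y3)"

definition weil_height :: "rat \<Rightarrow> real" where
  "weil_height r = (case quotient_of r of (p, q) \<Rightarrow> ln (real_of_int (max \<bar>p\<bar> \<bar>q\<bar>)))"

fun x_height :: "ept \<Rightarrow> real" where
  "x_height Inf = 0"
| "x_height (Pt x y) = weil_height x"

text \<open>Canonical height (not normalized by 1/2): lim h(x(2^n P)) / 4^n.\<close>
definition can_height :: "rat \<Rightarrow> rat \<Rightarrow> ept \<Rightarrow> real" where
  "can_height a b P = lim (\<lambda>n. x_height (((\<lambda>R. ec_add a b R R) ^^ n) P) / 4 ^ n)"

definition integral_point :: "rat \<Rightarrow> rat \<Rightarrow> ept \<Rightarrow> bool" where
  "integral_point a b P = (\<exists>x y. P = Pt x y \<and> x \<in> \<int> \<and> y \<in> \<int> \<and> on_curve a b P)"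

definition cos_angle :: "rat \<Rightarrow> rat \<Rightarrow> ept \<Rightarrow> ept \<Rightarrow> real" where
  "cos_angle a b P Q =
     (can_height a b (ec_add a b P Q) - can_height a b P - can_height a b Q)
       / (2 * sqrt (can_height a b P * can_height a b Q))"

fun xcoord :: "ept \<Rightarrow> rat" where
  "xcoord Inf = 0" | "xcoord (Pt x y) = x"

end

theory Submission
  imports Defs
begin

lemma wh_frac:
  fixes n d :: int assumes d: "d \<noteq> 0"
  shows "weil_height (of_int n / of_int d) = ln (real_of_int (max \<bar>n\<bar> \<bar>d\<bar>) / real_of_int (gcd n d))"
proof -
  define g where "g = gcd n d"
  have gpos: "g > 0" using d by (simp add: g_def)
  have gn: "g dvd n" and gd: "g dvd d" by (auto simp: g_def)
  have e: "of_int n / of_int d = Fract n d" by (simp add: Fract_of_int_quotient)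
  have key: "real_of_int (max \<bar>n div c\<bar> \<bar>d div c\<bar>) = real_of_int (max \<bar>n\<bar> \<bar>d\<bar>) / real_of_int g"
    if "c = g \<or> c = - g" for c
  proof -
    have cn: "c dvd n" and cd: "c dvd d" using that gn gd by auto
    have c0: "c \<noteq> 0" using that gpos by auto
    have "real_of_int \<bar>n div c\<bar> = \<bar>real_of_int n\<bar> / real_of_int g"
      using that cn c0 gpos by (auto simp: of_int_div)
    moreover have "real_of_int \<bar>d div c\<bar> = \<bar>real_of_int d\<bar> / real_of_int g"
      using that cd c0 gpos by (auto simp: of_int_div)
    ultimately show ?thesis using gpos
      by (simp only: of_int_max of_int_abs max_divide_distrib_right, simp)
  qed
  show ?thesis
  proof (cases "d > 0")
    case True
    then show ?thesis unfolding weil_height_def e quotient_of_Fract normalize_def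
      using key[of g] by (simp add: Let_def g_def)
  next
    case False
    then show ?thesis unfolding weil_height_def e quotient_of_Fract normalize_def
      using key[of "-g"] d by (simp add: Let_def g_def)
  qed
qed

lemma mono_bound:
  fixes p q m :: int assumes "\<bar>p\<bar> \<le> m" "\<bar>q\<bar> \<le> m"
  shows "\<bar>c * p^i * q^j\<bar> \<le> \<bar>c\<bar> * m^(i+j)"
proof -
  have "\<bar>p^i\<bar> \<le> m^i" unfolding power_abs by (rule power_mono) (use assms in auto)
  moreover have "\<bar>q^j\<bar> \<le> m^j" unfolding power_abs by (rule power_mono) (use assms in auto)
  ultimately have "\<bar>p^i\<bar> * \<bar>q^j\<bar> \<le> m^i * m^j"
    by (intro mult_mono) auto
  then have "\<bar>c\<bar> * (\<bar>p^i\<bar> * \<bar>q^j\<bar>) \<le> \<bar>c\<bar> * (m^i * m^j)"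
    by (intro mult_left_mono) auto
  then show ?thesis by (simp add: abs_mult power_add mult.assoc)
qed

lemma cubic_bound:
  fixes p q m c0 c1 c2 c3 :: int assumes "\<bar>p\<bar> \<le> m" "\<bar>q\<bar> \<le> m"
  shows "\<bar>c0*p^3 + c1*p^2*q + c2*p*q^2 + c3*q^3\<bar> \<le> (\<bar>c0\<bar>+\<bar>c1\<bar>+\<bar>c2\<bar>+\<bar>c3\<bar>)*m^3"
proof -
  have "\<bar>c0*p^3\<bar> \<le> \<bar>c0\<bar>*m^3" using mono_bound[OF assms, of c0 3 0] by simp
  moreover have "\<bar>c1*p^2*q\<bar> \<le> \<bar>c1\<bar>*m^3" using mono_bound[OF assms, of c1 2 1] by simp
  moreover have "\<bar>c2*p*q^2\<bar> \<le> \<bar>c2\<bar>*m^3" using mono_bound[OF assms, of c2 1 2] by (simp add: eval_nat_numeral)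
  moreover have "\<bar>c3*q^3\<bar> \<le> \<bar>c3\<bar>*m^3" using mono_bound[OF assms, of c3 0 3] by simp
  moreover have "\<bar>c0*p^3 + c1*p^2*q + c2*p*q^2 + c3*q^3\<bar> \<le> \<bar>c0*p^3\<bar> + \<bar>c1*p^2*q\<bar> + \<bar>c2*p*q^2\<bar> + \<bar>c3*q^3\<bar>"
    using abs_triangle_ineq[of "c0*p^3 + c1*p^2*q + c2*p*q^2" "c3*q^3"]
      abs_triangle_ineq[of "c0*p^3 + c1*p^2*q" "c2*p*q^2"] abs_triangle_ineq[of "c0*p^3" "c1*p^2*q"] by linarith
  ultimately show ?thesis unfolding distrib_right by linarith
qed

lemma quartic_bound:
  fixes p q m c0 c1 c2 c3 c4 :: int assumes "\<bar>p\<bar> \<le> m" "\<bar>q\<bar> \<le> m"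
  shows "\<bar>c0*p^4 + c1*p^3*q + c2*p^2*q^2 + c3*p*q^3 + c4*q^4\<bar> \<le> (\<bar>c0\<bar>+\<bar>c1\<bar>+\<bar>c2\<bar>+\<bar>c3\<bar>+\<bar>c4\<bar>)*m^4"
proof -
  have "\<bar>c0*p^4\<bar> \<le> \<bar>c0\<bar>*m^4" using mono_bound[OF assms, of c0 4 0] by simp
  moreover have "\<bar>c1*p^3*q\<bar> \<le> \<bar>c1\<bar>*m^4" using mono_bound[OF assms, of c1 3 1] by simp
  moreover have "\<bar>c2*p^2*q^2\<bar> \<le> \<bar>c2\<bar>*m^4" using mono_bound[OF assms, of c2 2 2] by simp
  moreover have "\<bar>c3*p*q^3\<bar> \<le> \<bar>c3\<bar>*m^4" using mono_bound[OF assms, of c3 1 3] by simp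
  moreover have "\<bar>c4*q^4\<bar> \<le> \<bar>c4\<bar>*m^4" using mono_bound[OF assms, of c4 0 4] by simp
  moreover have "\<bar>c0*p^4 + c1*p^3*q + c2*p^2*q^2 + c3*p*q^3 + c4*q^4\<bar> \<le> \<bar>c0*p^4\<bar> + \<bar>c1*p^3*q\<bar> + \<bar>c2*p^2*q^2\<bar> + \<bar>c3*p*q^3\<bar> + \<bar>c4*q^4\<bar>"
    using abs_triangle_ineq[of "c0*p^4 + c1*p^3*q + c2*p^2*q^2 + c3*p*q^3" "c4*q^4"]
      abs_triangle_ineq[of "c0*p^4 + c1*p^3*q + c2*p^2*q^2" "c3*p*q^3"]
      abs_triangle_ineq[of "c0*p^4 + c1*p^3*q" "c2*p^2*q^2"] abs_triangle_ineq[of "c0*p^4" "c1*p^3*q"] by linarith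
  ultimately show ?thesis unfolding distrib_right by linarith
qed

definition phi :: "int \<Rightarrow> int \<Rightarrow> rat \<Rightarrow> rat" where
 "phi A B t = (t^4 - 2*of_int A*t^2 - 8*of_int B*t + (of_int A)^2) / (4*(t^3 + of_int A*t + of_int B))"
definition fE :: "int \<Rightarrow> int \<Rightarrow> rat \<Rightarrow> rat" where "fE A B t = t^3 + of_int A*t + of_int B"

lemma wh_quot: assumes "quotient_of t = (p, q)" shows "weil_height t = ln (real_of_int (max \<bar>p\<bar> q))"
  using assms quotient_of_denom_pos[OF assms] by (simp add: weil_height_def)

lemma hG: fixes P Q a b :: rat assumes "Q \<noteq> 0"
  shows "4*P^3*Q + 4*a*P*Q^3 + 4*b*Q^4 = 4*Q^4*((P/Q)^3 + a*(P/Q) + b)"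
  using assms by (simp add: field_simps power_divide) (simp add: eval_nat_numeral algebra_simps)
lemma hF: fixes P Q a b :: rat assumes "Q \<noteq> 0"
  shows "P^4 - 2*a*P^2*Q^2 - 8*b*P*Q^3 + a^2*Q^4 = Q^4*((P/Q)^4 - 2*a*(P/Q)^2 - 8*b*(P/Q) + a^2)"
  using assms by (simp add: field_simps power_divide) (simp add: eval_nat_numeral algebra_simps)

lemma up_aux: fixes Mx g K m :: real assumes "g \<ge> 1" "Mx \<ge> 1" "Mx \<le> K*m^4" "m \<ge> 1" "K > 0"
  shows "ln (Mx/g) \<le> ln K + 4 * ln m"
proof -
  have "Mx / g \<le> Mx" using assms by (simp add: divide_le_eq mult_le_cancel_left1)
  also have "\<dots> \<le> K*m^4" by fact
  finally have "ln (Mx/g) \<le> ln (K*m^4)" using assms by (intro ln_mono) auto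
  also have "\<dots> = ln K + 4 * ln m" using assms by (simp add: ln_mult ln_realpow)
  finally show ?thesis .
qed
lemma lo_aux: fixes Mx g K' m d :: real assumes "g \<ge> 1" "g \<le> d" "Mx \<ge> 1" "d*m^4 \<le> K'*Mx" "m \<ge> 1" "K' > 0"
  shows "4 * ln m - ln K' \<le> ln (Mx/g)"
proof -
  have "m^4 / K' \<le> Mx / d" using assms by (simp add: divide_simps) (simp add: mult.commute)
  also have "\<dots> \<le> Mx / g" using assms by (intro divide_left_mono) auto
  finally have "ln (m^4 / K') \<le> ln (Mx / g)" using assms by (intro ln_mono) auto
  moreover have "ln (m^4 / K') = 4 * ln m - ln K'" using assms by (simp add: ln_div ln_realpow)
  ultimately show ?thesis by simp
qed

lemma tate_step:
  fixes A B :: int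
  assumes disc: "4*A^3+27*B^2 \<noteq> 0"
  shows "\<exists>C\<ge>0. \<forall>t. fE A B t \<noteq> 0 \<longrightarrow> \<bar>weil_height (phi A B t) - 4*weil_height t\<bar> \<le> C"
proof -
  define \<Delta> where "\<Delta> = 4*A^3+27*B^2"
  define KF where "KF = \<bar>1\<bar> + \<bar>0\<bar> + \<bar>-2*A\<bar> + \<bar>-8*B\<bar> + \<bar>A^2\<bar>"
  define KG where "KG = \<bar>0\<bar> + \<bar>4\<bar> + \<bar>0\<bar> + \<bar>4*A\<bar> + \<bar>4*B\<bar>"
  define Ka where "Ka = \<bar>0\<bar> + \<bar>12\<bar> + \<bar>0\<bar> + \<bar>16*A\<bar>"
  define Kb where "Kb = \<bar>3\<bar> + \<bar>0\<bar> + \<bar>-5*A\<bar> + \<bar>-27*B\<bar>"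
  define Kc where "Kc = \<bar>4*\<Delta>\<bar> + \<bar>-4*A^2*B\<bar> + \<bar>4*A*(3*A^3+22*B^2)\<bar> + \<bar>12*B*(A^3+8*B^2)\<bar>"
  define Kd where "Kd = \<bar>A^2*B\<bar> + \<bar>A*(5*A^3+32*B^2)\<bar> + \<bar>2*B*(13*A^3+96*B^2)\<bar> + \<bar>-3*A^2*(A^3+8*B^2)\<bar>"
  define K where "K = KF + KG"
  define K' where "K' = Ka + Kb + Kc + Kd"
  have D0: "\<Delta> \<noteq> 0" using disc by (simp add: \<Delta>_def)
  have Kpos: "K > 0" unfolding K_def KF_def KG_def
    using abs_ge_zero[of "-2*A"] abs_ge_zero[of "-8*B"] abs_ge_zero[of "A^2"] abs_ge_zero[of "4*A"] abs_ge_zero[of "4*B"]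
    by linarith
  have "Ka \<ge> 0" "Kb \<ge> 0" "Kd \<ge> 0" unfolding Ka_def Kb_def Kd_def by simp_all
  moreover have "Kc \<ge> \<bar>4*\<Delta>\<bar>" unfolding Kc_def by simp
  ultimately have K'pos: "K' > 0" unfolding K'_def using D0 by linarith
  define C where "C = max (ln (real_of_int K)) (ln (real_of_int K'))"
  have "real_of_int K \<ge> 1" using Kpos by simp
  then have "C \<ge> 0" unfolding C_def by (simp add: le_max_iff_disj)
  moreover have "\<bar>weil_height (phi A B t) - 4*weil_height t\<bar> \<le> C" if ft: "fE A B t \<noteq> 0" for t
  proof -
    obtain p q where pq: "quotient_of t = (p, q)" by (cases "quotient_of t")
    have qpos: "q > 0" using quotient_of_denom_pos[OF pq] .
    have cop: "coprime p q" using quotient_of_coprime[OF pq] .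
    have tpq: "t = of_int p / of_int q" using quotient_of_div[OF pq] .
    define m where "m = max \<bar>p\<bar> q"
    have m1: "m \<ge> 1" using qpos by (simp add: m_def)
    have pm: "\<bar>p\<bar> \<le> m" and qm: "\<bar>q\<bar> \<le> m" using qpos by (auto simp: m_def)
    have wht: "weil_height t = ln (real_of_int m)" using wh_quot[OF pq] by (simp add: m_def)
    define F where "F = 1*p^4 + 0*p^3*q + (-2*A)*p^2*q^2 + (-8*B)*p*q^3 + A^2*q^4"
    define G where "G = 0*p^4 + 4*p^3*q + 0*p^2*q^2 + (4*A)*p*q^3 + (4*B)*q^4"
    define f1 where "f1 = 0*p^3 + 12*p^2*q + 0*p*q^2 + (16*A)*q^3"
    define g1 where "g1 = 3*p^3 + 0*p^2*q + (-5*A)*p*q^2 + (-27*B)*q^3"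
    define f2 where "f2 = (4*\<Delta>)*p^3 + (-4*A^2*B)*p^2*q + (4*A*(3*A^3+22*B^2))*p*q^2 + (12*B*(A^3+8*B^2))*q^3"
    define g2 where "g2 = (A^2*B)*p^3 + (A*(5*A^3+32*B^2))*p^2*q + (2*B*(13*A^3+96*B^2))*p*q^2 + (-3*A^2*(A^3+8*B^2))*q^3"
    have id1: "f1*F - g1*G = 4*\<Delta>*q^7" unfolding F_def G_def f1_def g1_def \<Delta>_def by algebra
    have id2: "f2*F + g2*G = 4*\<Delta>*p^7" unfolding F_def G_def f2_def g2_def \<Delta>_def by algebra
    have q0: "rat_of_int q \<noteq> 0" using qpos by simp
    have Gq: "rat_of_int G = 4 * (rat_of_int q)^4 * fE A B t"
      unfolding G_def fE_def tpq using hG[OF q0, of "of_int p" "of_int A" "of_int B"] by simp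
    have Fq: "rat_of_int F = (rat_of_int q)^4 * (t^4 - 2*of_int A*t^2 - 8*of_int B*t + (of_int A)^2)"
      unfolding F_def tpq using hF[OF q0, of "of_int p" "of_int A" "of_int B"] by simp
    have G0: "G \<noteq> 0" using Gq q0 ft by auto
    have phiFG: "phi A B t = rat_of_int F / rat_of_int G"
      unfolding phi_def Fq Gq using q0 ft by (simp add: fE_def)
    have whphi: "weil_height (phi A B t) = ln (real_of_int (max \<bar>F\<bar> \<bar>G\<bar>) / real_of_int (gcd F G))"
      using wh_frac[OF G0, of F] phiFG by simp
    define Mx where "Mx = max \<bar>F\<bar> \<bar>G\<bar>"
    define g where "g = gcd F G"
    have Mx1: "Mx \<ge> 1" using G0 by (simp add: Mx_def)
    have g1: "g \<ge> 1" using G0 by (simp add: g_def) (metis gcd_pos_int int_one_le_iff_zero_less)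
    have FMx: "\<bar>F\<bar> \<le> Mx" and GMx: "\<bar>G\<bar> \<le> Mx" by (auto simp: Mx_def)
    have Fb: "\<bar>F\<bar> \<le> KF*m^4" unfolding F_def KF_def by (rule quartic_bound[OF pm qm])
    have Gb: "\<bar>G\<bar> \<le> KG*m^4" unfolding G_def KG_def by (rule quartic_bound[OF pm qm])
    have "KF \<ge> 0" "KG \<ge> 0" unfolding KF_def KG_def by simp_all
    have Mxb: "Mx \<le> K*m^4" unfolding Mx_def K_def using Fb Gb \<open>KF \<ge> 0\<close> \<open>KG \<ge> 0\<close> m1
      by (simp add: distrib_right) (smt (verit) mult_nonneg_nonneg zero_le_power)
    have f1b: "\<bar>f1\<bar> \<le> Ka*m^3" unfolding f1_def Ka_def by (rule cubic_bound[OF pm qm])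
    have g1b: "\<bar>g1\<bar> \<le> Kb*m^3" unfolding g1_def Kb_def by (rule cubic_bound[OF pm qm])
    have f2b: "\<bar>f2\<bar> \<le> Kc*m^3" unfolding f2_def Kc_def by (rule cubic_bound[OF pm qm])
    have g2b: "\<bar>g2\<bar> \<le> Kd*m^3" unfolding g2_def Kd_def by (rule cubic_bound[OF pm qm])
    have prodb: "\<bar>u*w\<bar> \<le> k*m^3*Mx" if "\<bar>u\<bar> \<le> k*m^3" "\<bar>w\<bar> \<le> Mx" for u w k
      unfolding abs_mult using that by (intro mult_mono) auto
    have q7: "\<bar>4*\<Delta>*q^7\<bar> \<le> (Ka+Kb)*m^3*Mx"
    proof -
      have "\<bar>4*\<Delta>*q^7\<bar> = \<bar>f1*F - g1*G\<bar>" using id1 by simp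
      also have "\<dots> \<le> \<bar>f1*F\<bar> + \<bar>g1*G\<bar>" by (rule abs_triangle_ineq4)
      also have "\<dots> \<le> Ka*m^3*Mx + Kb*m^3*Mx" using prodb[OF f1b FMx] prodb[OF g1b GMx] by linarith
      finally show ?thesis by (simp add: distrib_right)
    qed
    have p7: "\<bar>4*\<Delta>*p^7\<bar> \<le> (Kc+Kd)*m^3*Mx"
    proof -
      have "\<bar>4*\<Delta>*p^7\<bar> = \<bar>f2*F + g2*G\<bar>" using id2 by simp
      also have "\<dots> \<le> \<bar>f2*F\<bar> + \<bar>g2*G\<bar>" by (rule abs_triangle_ineq)
      also have "\<dots> \<le> Kc*m^3*Mx + Kd*m^3*Mx" using prodb[OF f2b FMx] prodb[OF g2b GMx] by linarith
      finally show ?thesis by (simp add: distrib_right)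
    qed
    have "Ka \<ge> 0" "Kb \<ge> 0" "Kc \<ge> 0" "Kd \<ge> 0" unfolding Ka_def Kb_def Kc_def Kd_def by simp_all
    have m7: "\<bar>4*\<Delta>\<bar>*m^7 \<le> K'*m^3*Mx"
    proof (cases "\<bar>p\<bar> \<le> q")
      case True
      then have "m = q" by (simp add: m_def)
      then have "\<bar>4*\<Delta>\<bar>*m^7 = \<bar>4*\<Delta>*q^7\<bar>" using qpos by (simp add: abs_mult)
      also have "\<dots> \<le> (Ka+Kb)*m^3*Mx" by (rule q7)
      also have "\<dots> \<le> K'*m^3*Mx" unfolding K'_def using \<open>Kc \<ge> 0\<close> \<open>Kd \<ge> 0\<close> m1 Mx1
        by (intro mult_right_mono) auto
      finally show ?thesis .
    next
      case False
      then have "m = \<bar>p\<bar>" by (simp add: m_def)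
      then have "\<bar>4*\<Delta>\<bar>*m^7 = \<bar>4*\<Delta>*p^7\<bar>" by (simp add: abs_mult power_abs)
      also have "\<dots> \<le> (Kc+Kd)*m^3*Mx" by (rule p7)
      also have "\<dots> \<le> K'*m^3*Mx" unfolding K'_def using \<open>Ka \<ge> 0\<close> \<open>Kb \<ge> 0\<close> m1 Mx1
        by (intro mult_right_mono) auto
      finally show ?thesis .
    qed
    have m4: "\<bar>4*\<Delta>\<bar>*m^4 \<le> K'*Mx"
    proof -
      have "m^3 * (\<bar>4*\<Delta>\<bar>*m^4) \<le> m^3 * (K'*Mx)" using m7 by (simp add: algebra_simps eval_nat_numeral)
      then show ?thesis using m1 by (simp add: mult_le_cancel_left)
    qed
    have gdvd: "g dvd \<bar>4*\<Delta>\<bar>"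
    proof -
      have "g dvd 4*\<Delta>*q^7" unfolding id1[symmetric] g_def by simp
      moreover have "g dvd 4*\<Delta>*p^7" unfolding id2[symmetric] g_def by simp
      ultimately have "g dvd gcd (4*\<Delta>*q^7) (4*\<Delta>*p^7)" by simp
      also have "gcd (4*\<Delta>*q^7) (4*\<Delta>*p^7) = \<bar>4*\<Delta>\<bar> * gcd (q^7) (p^7)"
        using gcd_mult_distrib_int[of "4*\<Delta>" "q^7" "p^7"] by (simp add: mult.assoc)
      also have "gcd (q^7) (p^7) = 1" using cop by (simp add: coprime_commute)
      finally show ?thesis by simp
    qed
    have gle: "g \<le> \<bar>4*\<Delta>\<bar>" using gdvd D0 by (intro zdvd_imp_le) auto
    have wh_eq: "weil_height (phi A B t) = ln (real_of_int Mx / real_of_int g)" using whphi by (simp add: Mx_def g_def)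
    have rm: "real_of_int m \<ge> 1" using m1 by simp
    have rMx: "real_of_int Mx \<ge> 1" using Mx1 by simp
    have rg: "real_of_int g \<ge> 1" using g1 by simp
    have r1: "real_of_int Mx \<le> real_of_int K * real_of_int m ^ 4"
    proof -
      have "real_of_int Mx \<le> real_of_int (K*m^4)" using Mxb by (simp only: of_int_le_iff)
      then show ?thesis by simp
    qed
    have r2: "real_of_int \<bar>4*\<Delta>\<bar> * real_of_int m ^ 4 \<le> real_of_int K' * real_of_int Mx"
    proof -
      have "real_of_int (\<bar>4*\<Delta>\<bar>*m^4) \<le> real_of_int (K'*Mx)" using m4 by (simp only: of_int_le_iff)
      then show ?thesis by simp
    qed
    have r3: "real_of_int g \<le> real_of_int \<bar>4*\<Delta>\<bar>" using gle by (simp only: of_int_le_iff)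
    have up: "weil_height (phi A B t) \<le> ln (real_of_int K) + 4 * ln (real_of_int m)"
      unfolding wh_eq using up_aux[OF rg rMx r1 rm] Kpos by simp
    have lo: "4 * ln (real_of_int m) - ln (real_of_int K') \<le> weil_height (phi A B t)"
      unfolding wh_eq using lo_aux[OF rg r3 rMx r2 rm] K'pos by simp
    have "ln (real_of_int K) \<le> C" "ln (real_of_int K') \<le> C" unfolding C_def by auto
    then show ?thesis using up lo wht unfolding abs_le_iff by linarith
  qed
  ultimately show ?thesis by blast
qed

lemma tate_conv:
  fixes h :: "nat \<Rightarrow> real"
  assumes hC: "\<And>n. \<bar>h (Suc n) - 4 * h n\<bar> \<le> C"
  shows "\<exists>L. (\<lambda>n. h n / 4^n) \<longlonglongrightarrow> L \<and> \<bar>L - h 0\<bar> \<le> C/3"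
proof -
  define d where "d n = h (Suc n) / 4^(Suc n) - h n / 4^n" for n
  have dB: "\<bar>d n\<bar> \<le> C/4 * (1/4)^n" for n
  proof -
    have "d n = (h (Suc n) - 4 * h n) / 4^(Suc n)" by (simp add: d_def field_simps)
    then have "\<bar>d n\<bar> = \<bar>h (Suc n) - 4 * h n\<bar> / 4^(Suc n)" by simp
    also have "\<dots> \<le> C / 4^(Suc n)" using hC[of n] by (intro divide_right_mono) auto
    also have "\<dots> = C/4 * (1/4)^n" by (simp add: field_simps power_divide)
    finally show ?thesis .
  qed
  have sg: "summable (\<lambda>n. C/4 * (1/4::real)^n)" by (intro summable_mult summable_geometric) auto
  have sd: "summable (\<lambda>n. \<bar>d n\<bar>)" by (rule summable_comparison_test[OF _ sg]) (use dB in auto)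
  then have sd': "summable d" by (rule summable_rabs_cancel)
  have tel: "h n / 4^n = h 0 + (\<Sum>k<n. d k)" for n
    by (induction n) (simp_all add: d_def)
  have "(\<lambda>n. h 0 + (\<Sum>k<n. d k)) \<longlonglongrightarrow> h 0 + suminf d"
    by (intro tendsto_add tendsto_const summable_LIMSEQ sd')
  then have lim: "(\<lambda>n. h n / 4^n) \<longlonglongrightarrow> h 0 + suminf d" using tel by simp
  have "\<bar>suminf d\<bar> \<le> (\<Sum>n. \<bar>d n\<bar>)" by (rule summable_rabs[OF sd])
  also have "\<dots> \<le> (\<Sum>n. C/4 * (1/4::real)^n)" by (intro suminf_le sd sg) (use dB in auto)
  also have "\<dots> = C/4 * (\<Sum>n. (1/4::real)^n)" by (rule suminf_mult) (rule summable_geometric, simp)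
  also have "(\<Sum>n. (1/4::real)^n) = 4/3" using suminf_geometric[of "1/4::real"] by simp
  also have "C/4 * (4/3) = C/3" by simp
  finally show ?thesis using lim by (intro exI[of _ "h 0 + suminf d"]) simp
qed

lemma wh_nonneg: "weil_height r \<ge> 0"
proof -
  obtain p q where pq: "quotient_of r = (p, q)" by (cases "quotient_of r")
  have "q > 0" using quotient_of_denom_pos[OF pq] .
  then have "real_of_int (max \<bar>p\<bar> \<bar>q\<bar>) \<ge> 1" by linarith
  then show ?thesis using pq by (simp add: weil_height_def)
qed

lemma wh_upper:
  fixes n d c :: int assumes d: "d \<noteq> 0" and c: "c > 0" "c dvd n" "c dvd d"
  shows "weil_height (of_int n / of_int d) \<le> ln (real_of_int (max \<bar>n\<bar> \<bar>d\<bar>) / real_of_int c)"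
proof -
  have g: "gcd n d > 0" using d by simp
  have "c dvd gcd n d" using c by simp
  then have cg: "c \<le> gcd n d" using g by (intro zdvd_imp_le) auto
  have m: "max \<bar>n\<bar> \<bar>d\<bar> \<ge> 1" using d by linarith
  have "real_of_int (max \<bar>n\<bar> \<bar>d\<bar>) / real_of_int (gcd n d) \<le> real_of_int (max \<bar>n\<bar> \<bar>d\<bar>) / real_of_int c"
    using cg c m g by (intro divide_left_mono) auto
  moreover have "real_of_int (max \<bar>n\<bar> \<bar>d\<bar>) / real_of_int (gcd n d) > 0" using m g by simp
  ultimately show ?thesis unfolding wh_frac[OF d] by (intro ln_mono) auto
qed

lemma wh_lower:
  fixes n d :: int assumes d: "d \<noteq> 0" and n: "n \<noteq> 0"
  shows "ln (real_of_int \<bar>n\<bar> / real_of_int (gcd n d)) \<le> weil_height (of_int n / of_int d)"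
proof -
  have g: "gcd n d > 0" using d by simp
  have "real_of_int \<bar>n\<bar> / real_of_int (gcd n d) \<le> real_of_int (max \<bar>n\<bar> \<bar>d\<bar>) / real_of_int (gcd n d)"
    using g by (intro divide_right_mono) auto
  moreover have "real_of_int \<bar>n\<bar> / real_of_int (gcd n d) > 0" using n g by simp
  ultimately show ?thesis unfolding wh_frac[OF d] by (intro ln_mono) auto
qed

lemma wh_ab:
  fixes a b :: int assumes a: "a \<noteq> 0" and b: "b \<noteq> 0"
  shows "weil_height (of_int a * r / of_int b) \<le> ln (real_of_int (max \<bar>a\<bar> \<bar>b\<bar>)) + weil_height r"
proof -
  obtain p q where pq: "quotient_of r = (p, q)" by (cases "quotient_of r")
  have q: "q > 0" using quotient_of_denom_pos[OF pq] .
  have r: "r = of_int p / of_int q" using quotient_of_div[OF pq] .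
  have e: "of_int a * r / of_int b = of_int (a*p) / (of_int (b*q) :: rat)" using q b by (simp add: r)
  have bq: "b*q \<noteq> 0" using b q by simp
  have "weil_height (of_int a * r / of_int b) \<le> ln (real_of_int (max \<bar>a*p\<bar> \<bar>b*q\<bar>) / real_of_int 1)"
    unfolding e by (rule wh_upper[OF bq]) auto
  also have "\<dots> \<le> ln (real_of_int (max \<bar>a\<bar> \<bar>b\<bar>) * real_of_int (max \<bar>p\<bar> \<bar>q\<bar>))"
  proof -
    have "max \<bar>a*p\<bar> \<bar>b*q\<bar> \<le> max \<bar>a\<bar> \<bar>b\<bar> * max \<bar>p\<bar> \<bar>q\<bar>"
      by (auto simp: abs_mult intro: mult_mono)
    then have "real_of_int (max \<bar>a*p\<bar> \<bar>b*q\<bar>) \<le> real_of_int (max \<bar>a\<bar> \<bar>b\<bar>) * real_of_int (max \<bar>p\<bar> \<bar>q\<bar>)"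
      by (metis of_int_le_iff of_int_mult)
    moreover have "max \<bar>a*p\<bar> \<bar>b*q\<bar> > 0" using bq by (simp add: less_max_iff_disj)
    ultimately show ?thesis by (intro ln_mono) auto
  qed
  also have "\<dots> = ln (real_of_int (max \<bar>a\<bar> \<bar>b\<bar>)) + weil_height r"
    using a q pq by (subst ln_mult) (auto simp: weil_height_def)
  finally show ?thesis .
qed

lemma wh_scale:
  fixes k :: int assumes k: "k \<noteq> 0"
  shows "\<bar>weil_height (of_int k * r) - weil_height r\<bar> \<le> ln (real_of_int \<bar>k\<bar>)"
proof -
  have "weil_height (of_int k * r) \<le> ln (real_of_int (max \<bar>k\<bar> \<bar>1\<bar>)) + weil_height r"
    using wh_ab[OF k, of 1 r] by simp
  moreover have "weil_height r \<le> ln (real_of_int (max \<bar>1\<bar> \<bar>k\<bar>)) + weil_height (of_int k * r)"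
    using wh_ab[of 1 k "of_int k * r"] k by simp
  moreover have "max \<bar>k\<bar> \<bar>1\<bar> = \<bar>k\<bar>" "max \<bar>1\<bar> \<bar>k\<bar> = \<bar>k\<bar>" using k by auto
  ultimately show ?thesis by (simp add: abs_le_iff)
qed

lemma chord_identity:
  fixes l x1 x2 y1 a b :: rat
  defines "c \<equiv> \<lambda>z. z^3 + a*z + b - (l*(z-x1)+y1)^2"
  shows "c (l^2-x1-x2) * (x1-x2) = (l^2-x1-x2-x2) * c x1 - (l^2-x1-x2-x1) * c x2"
  unfolding c_def by algebra

lemma tangent_identity:
  fixes l x1 y1 a b :: rat
  defines "c \<equiv> \<lambda>z. z^3 + a*z + b - (l*(z-x1)+y1)^2"
  shows "c (l^2-2*x1) = c x1 + (3*x1^2+a-2*l*y1)*(l^2-2*x1-x1)"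
  unfolding c_def by algebra

lemma add_pts:
  fixes a b x1 y1 x2 y2 :: rat
  assumes c1: "y1^2 = x1^3 + a*x1 + b" and c2: "y2^2 = x2^3 + a*x2 + b" and ne: "x1 \<noteq> x2"
  defines "l \<equiv> (y2-y1)/(x2-x1)"
  shows "ec_add a b (Pt x1 y1) (Pt x2 y2) = Pt (l^2-x1-x2) (l*(x1-(l^2-x1-x2))-y1)"
    and "on_curve a b (Pt (l^2-x1-x2) (l*(x1-(l^2-x1-x2))-y1))"
proof -
  show "ec_add a b (Pt x1 y1) (Pt x2 y2) = Pt (l^2-x1-x2) (l*(x1-(l^2-x1-x2))-y1)"
    using ne by (simp add: l_def Let_def)
  define c where "c \<equiv> \<lambda>z. z^3 + a*z + b - (l*(z-x1)+y1)^2"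
  have "c x1 = 0" using c1 by (simp add: c_def)
  moreover have "l*(x2-x1)+y1 = y2" using ne by (simp add: l_def)
  then have "c x2 = 0" using c2 by (simp add: c_def)
  moreover have "c (l^2-x1-x2) * (x1-x2) = (l^2-x1-x2-x2) * c x1 - (l^2-x1-x2-x1) * c x2"
    unfolding c_def by algebra
  ultimately have "c (l^2-x1-x2) * (x1-x2) = 0" by simp
  then have "c (l^2-x1-x2) = 0" using ne by simp
  then show "on_curve a b (Pt (l^2-x1-x2) (l*(x1-(l^2-x1-x2))-y1))"
    by (simp add: c_def power2_eq_square algebra_simps)
qed

lemma dbl_pt:
  fixes a b x1 y1 :: rat
  assumes c1: "y1^2 = x1^3 + a*x1 + b" and ne: "y1 \<noteq> 0"
  defines "l \<equiv> (3*x1^2+a)/(2*y1)"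
  shows "ec_add a b (Pt x1 y1) (Pt x1 y1) = Pt (l^2-2*x1) (l*(x1-(l^2-2*x1))-y1)"
    and "on_curve a b (Pt (l^2-2*x1) (l*(x1-(l^2-2*x1))-y1))"
proof -
  show "ec_add a b (Pt x1 y1) (Pt x1 y1) = Pt (l^2-2*x1) (l*(x1-(l^2-2*x1))-y1)"
    using ne by (simp add: l_def Let_def)
  define c where "c \<equiv> \<lambda>z. z^3 + a*z + b - (l*(z-x1)+y1)^2"
  have "c x1 = 0" using c1 by (simp add: c_def)
  moreover have "3*x1^2+a-2*l*y1 = 0" using ne by (simp add: l_def)
  moreover have "c (l^2-2*x1) = c x1 + (3*x1^2+a-2*l*y1)*(l^2-2*x1-x1)" unfolding c_def by algebra
  ultimately have "c (l^2-2*x1) = 0" by simp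
  then show "on_curve a b (Pt (l^2-2*x1) (l*(x1-(l^2-2*x1))-y1))"
    by (simp add: c_def power2_eq_square algebra_simps)
qed

lemma dbl_zero:
  "ec_add a b (Pt x1 0) (Pt x1 0) = Inf" by simp

lemma dbl_x:
  fixes D x y :: rat and A B :: int
  assumes D: "D \<noteq> 0" and c1: "y^2 = x^3 + (D^2*of_int A)*x + D^3*of_int B" and ne: "y \<noteq> 0"
  shows "((3*x^2+D^2*of_int A)/(2*y))^2 - 2*x = D * phi A B (x/D)"
    and "y^2 = D^3 * fE A B (x/D)"
proof -
  show y2: "y^2 = D^3 * fE A B (x/D)" using c1 D by (simp add: fE_def field_simps power3_eq_cube power2_eq_square)
  have f0: "fE A B (x/D) \<noteq> 0" using y2 ne D by auto
  have num: "(3*x^2+D^2*of_int A)^2 - 8*x*y^2 = x^4 - 2*(D^2*of_int A)*x^2 - 8*(D^3*of_int B)*x + (D^2*of_int A)^2"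
    unfolding c1 by algebra
  have "((3*x^2+D^2*of_int A)/(2*y))^2 - 2*x = ((3*x^2+D^2*of_int A)^2 - 8*x*y^2)/(4*y^2)"
    using ne by (simp add: field_simps power2_eq_square)
  also have "\<dots> = (x^4 - 2*(D^2*of_int A)*x^2 - 8*(D^3*of_int B)*x + (D^2*of_int A)^2) / (4*(D^3 * fE A B (x/D)))"
    unfolding num[symmetric] y2 ..
  also have "\<dots> = D * phi A B (x/D)"
  proof -
    define Nx where "Nx = x^4 - 2*(D^2*of_int A)*x^2 - 8*(D^3*of_int B)*x + (D^2*of_int A)^2"
    have e1: "(x/D)^4 - 2*of_int A*(x/D)^2 - 8*of_int B*(x/D) + (of_int A)^2 = Nx / D^4"
      unfolding Nx_def using D by (simp add: field_simps power_divide) (simp add: eval_nat_numeral algebra_simps)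
    have "D * phi A B (x/D) = D * (Nx / D^4) / (4 * fE A B (x/D))"
      unfolding phi_def e1[symmetric] by (simp add: fE_def)
    also have "\<dots> = Nx / (4*(D^3 * fE A B (x/D)))" using D f0 by (simp add: field_simps eval_nat_numeral)
    finally show ?thesis by (simp add: Nx_def)
  qed
  finally show "((3*x^2+D^2*of_int A)/(2*y))^2 - 2*x = D * phi A B (x/D)" .
qed

lemma curve_fE:
  fixes D x y :: rat and A B :: int
  assumes D: "D \<noteq> 0" and c1: "y^2 = x^3 + (D^2*of_int A)*x + D^3*of_int B"
  shows "y^2 = D^3 * fE A B (x/D)"
  using c1 D by (simp add: fE_def field_simps power3_eq_cube power2_eq_square)

lemma orbit:
  fixes A B D :: int and x y :: rat
  defines "a \<equiv> rat_of_int (D^2*A)" and "b \<equiv> rat_of_int (D^3*B)"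
  defines "t \<equiv> \<lambda>n. (phi A B ^^ n) (x / of_int D)"
  assumes D: "D \<noteq> 0" and P: "on_curve a b (Pt x y)"
  shows "(\<forall>k<n. fE A B (t k) \<noteq> 0) \<longrightarrow>
     (\<exists>y'. ((\<lambda>R. ec_add a b R R) ^^ n) (Pt x y) = Pt (of_int D * t n) y' \<and> y'^2 = (of_int D * t n)^3 + a*(of_int D * t n) + b)"
proof (induction n)
  case 0
  show ?case using P D by (simp add: t_def)
next
  case (Suc n)
  show ?case
  proof
    assume H: "\<forall>k<Suc n. fE A B (t k) \<noteq> 0"
    then obtain y' where y': "((\<lambda>R. ec_add a b R R) ^^ n) (Pt x y) = Pt (of_int D * t n) y'"
      and c: "y'^2 = (of_int D * t n)^3 + a*(of_int D * t n) + b" using Suc by auto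
    define X where "X = of_int D * t n"
    have Dr: "(of_int D :: rat) \<noteq> 0" using D by simp
    have c': "y'^2 = X^3 + ((of_int D)^2*of_int A)*X + (of_int D)^3*of_int B"
      using c by (simp add: X_def a_def b_def)
    have XD: "X / of_int D = t n" using Dr by (simp add: X_def)
    have "y'^2 = (of_int D)^3 * fE A B (t n)" using curve_fE[OF Dr c'] XD by simp
    then have y0: "y' \<noteq> 0" using H Dr by auto
    define l where "l = (3*X^2+a)/(2*y')"
    have c'': "y'^2 = X^3 + a*X + b" using c by (simp add: X_def)
    have st: "((\<lambda>R. ec_add a b R R) ^^ Suc n) (Pt x y) = Pt (l^2-2*X) (l*(X-(l^2-2*X))-y')"
      using dbl_pt(1)[OF c'' y0] y' by (simp add: l_def X_def)
    have oc: "on_curve a b (Pt (l^2-2*X) (l*(X-(l^2-2*X))-y'))"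
      using dbl_pt(2)[OF c'' y0] by (simp add: l_def)
    have "l^2 - 2*X = of_int D * phi A B (X / of_int D)"
      using dbl_x(1)[OF Dr c' y0] by (simp add: l_def a_def)
    also have "\<dots> = of_int D * t (Suc n)" using XD by (simp add: t_def)
    finally show "\<exists>y''. ((\<lambda>R. ec_add a b R R) ^^ Suc n) (Pt x y) = Pt (of_int D * t (Suc n)) y'' \<and>
        y''^2 = (of_int D * t (Suc n))^3 + a*(of_int D * t (Suc n)) + b"
      using st oc by auto
  qed
qed

lemma canh:
  fixes A B D :: int and x y :: rat and C :: real
  defines "a \<equiv> rat_of_int (D^2*A)" and "b \<equiv> rat_of_int (D^3*B)"
  assumes tate: "\<And>t. fE A B t \<noteq> 0 \<Longrightarrow> \<bar>weil_height (phi A B t) - 4*weil_height t\<bar> \<le> C"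
    and C0: "C \<ge> 0"
  assumes D: "D > 0" and P: "on_curve a b (Pt x y)"
  shows "can_height a b (Pt x y) \<le> weil_height (x / of_int D) + C/3"
    and "can_height a b (Pt x y) = 0 \<or> \<bar>can_height a b (Pt x y) - weil_height (x / of_int D)\<bar> \<le> C/3"
proof -
  define t where "t \<equiv> \<lambda>n. (phi A B ^^ n) (x / of_int D)"
  define dbl where "dbl \<equiv> (\<lambda>R. ec_add a b R R)"
  have D0: "D \<noteq> 0" using D by simp
  have orb: "(\<forall>k<n. fE A B (t k) \<noteq> 0) \<Longrightarrow>
     (\<exists>y'. (dbl ^^ n) (Pt x y) = Pt (of_int D * t n) y' \<and> y'^2 = (of_int D * t n)^3 + a*(of_int D * t n) + b)" for n
    using orbit[OF D0 P[unfolded a_def b_def], of n] unfolding t_def dbl_def a_def b_def by blast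
  have "can_height a b (Pt x y) = 0 \<or> \<bar>can_height a b (Pt x y) - weil_height (x / of_int D)\<bar> \<le> C/3"
  proof (cases "\<exists>k. fE A B (t k) = 0")
    case True
    then obtain k where k: "fE A B (t k) = 0" and kmin: "\<forall>j<k. fE A B (t j) \<noteq> 0"
      using exists_least_iff[of "\<lambda>k. fE A B (t k) = 0"] by auto
    obtain y' where y': "(dbl ^^ k) (Pt x y) = Pt (of_int D * t k) y'"
      and c: "y'^2 = (of_int D * t k)^3 + a*(of_int D * t k) + b" using orb[OF kmin] by auto
    have Dr: "(of_int D :: rat) \<noteq> 0" using D by simp
    have c': "y'^2 = (of_int D * t k)^3 + ((of_int D)^2*of_int A)*(of_int D * t k) + (of_int D)^3*of_int B"
      using c by (simp add: a_def b_def)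
    have "y'^2 = (of_int D)^3 * fE A B (t k)" using curve_fE[OF Dr c'] Dr by simp
    then have y0: "y' = 0" using k by simp
    have inf1: "(dbl ^^ Suc k) (Pt x y) = Inf" using y' y0 by (simp add: dbl_def)
    have infm: "(dbl ^^ (Suc k + m)) (Pt x y) = Inf" for m
      by (induction m) (use inf1 in \<open>simp_all add: dbl_def\<close>)
    have ev: "eventually (\<lambda>n. x_height ((dbl ^^ n) (Pt x y)) / 4^n = 0) sequentially"
      unfolding eventually_sequentially
    proof (intro exI allI impI)
      fix n assume "n \<ge> Suc k"
      then obtain m where "n = Suc k + m" using le_Suc_ex by blast
      then show "x_height ((dbl ^^ n) (Pt x y)) / 4^n = 0" using infm by simp
    qed
    have "(\<lambda>n. x_height ((dbl ^^ n) (Pt x y)) / 4^n) \<longlonglongrightarrow> 0"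
      by (rule tendsto_eventually[OF ev])
    then have "can_height a b (Pt x y) = 0" unfolding can_height_def dbl_def[symmetric] by (rule limI)
    then show ?thesis by simp
  next
    case False
    then have nz: "fE A B (t k) \<noteq> 0" for k by auto
    define h where "h n = weil_height (t n)" for n
    have hs: "\<bar>h (Suc n) - 4 * h n\<bar> \<le> C" for n
      using tate[OF nz[of n]] by (simp add: h_def t_def)
    obtain L where L: "(\<lambda>n. h n / 4^n) \<longlonglongrightarrow> L" and LC: "\<bar>L - h 0\<bar> \<le> C/3"
      using tate_conv[of h C, OF hs] by blast
    have xh: "x_height ((dbl ^^ n) (Pt x y)) = weil_height (of_int D * t n)" for n
    proof -
      obtain y' where "(dbl ^^ n) (Pt x y) = Pt (of_int D * t n) y'" using orb[of n] nz by auto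
      then show ?thesis by simp
    qed
    have dif: "(\<lambda>n. (weil_height (of_int D * t n) - h n) / 4^n) \<longlonglongrightarrow> 0"
    proof (rule tendsto_0_le[of "\<lambda>n. (1/4::real)^n" _ _ "ln (real_of_int D)"])
      show "(\<lambda>n. (1/4::real)^n) \<longlonglongrightarrow> 0" by (rule LIMSEQ_power_zero) simp
      show "\<forall>\<^sub>F n in sequentially. norm ((weil_height (of_int D * t n) - h n) / 4^n) \<le> norm ((1/4::real)^n) * ln (real_of_int D)"
      proof (intro always_eventually allI)
        fix n
        have "\<bar>weil_height (of_int D * t n) - h n\<bar> \<le> ln (real_of_int \<bar>D\<bar>)"
          unfolding h_def by (rule wh_scale[OF D0])
        then have "\<bar>weil_height (of_int D * t n) - h n\<bar> / 4^n \<le> ln (real_of_int D) / 4^n"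
          using D by (intro divide_right_mono) auto
        then show "norm ((weil_height (of_int D * t n) - h n) / 4^n) \<le> norm ((1/4::real)^n) * ln (real_of_int D)"
          by (simp add: power_divide)
      qed
    qed
    have "(\<lambda>n. h n / 4^n + (weil_height (of_int D * t n) - h n) / 4^n) \<longlonglongrightarrow> L + 0"
      by (intro tendsto_add L dif)
    then have "(\<lambda>n. x_height ((dbl ^^ n) (Pt x y)) / 4^n) \<longlonglongrightarrow> L"
      by (simp add: xh diff_divide_distrib)
    then have "can_height a b (Pt x y) = L" unfolding can_height_def dbl_def[symmetric] by (rule limI)
    moreover have "h 0 = weil_height (x / of_int D)" by (simp add: h_def t_def)
    ultimately show ?thesis using LC by simp
  qed
  then show "can_height a b (Pt x y) = 0 \<or> \<bar>can_height a b (Pt x y) - weil_height (x / of_int D)\<bar> \<le> C/3" .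
  then show "can_height a b (Pt x y) \<le> weil_height (x / of_int D) + C/3"
  proof
    assume "can_height a b (Pt x y) = 0"
    then show ?thesis using wh_nonneg[of "x / of_int D"] C0 by simp
  next
    assume "\<bar>can_height a b (Pt x y) - weil_height (x / of_int D)\<bar> \<le> C/3"
    then show ?thesis unfolding abs_le_iff by linarith
  qed
qed

lemma final_ineq:
  fixes u v S L K :: real
  assumes u: "u \<ge> 20*L" and L: "L > 0" and uv: "u \<le> 11/10 * v" and v: "v > 0"
    and S: "S \<le> 3*u + 2*L + K" and K: "10*K \<le> L"
  shows "(S - u - v) / (2 * sqrt (u*v)) \<le> 63/100"
proof -
  have u0: "u > 0" using u L by linarith
  have "(95/100*u)^2 \<le> u*v"
  proof -
    have "(95/100*u)^2 = u * (9025/10000*u)" by (simp add: power2_eq_square)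
    also have "\<dots> \<le> u * v" using uv u0 by (intro mult_left_mono) auto
    finally show ?thesis .
  qed
  then have sq: "95/100*u \<le> sqrt (u*v)" using u0 by (metis real_le_rsqrt)
  have "S - u - v \<le> 126/100 * (95/100*u)" using S K u uv L by linarith
  also have "\<dots> \<le> 126/100 * sqrt (u*v)" using sq by simp
  finally have "S - u - v \<le> 63/100 * (2 * sqrt (u*v))" by simp
  moreover have "sqrt (u*v) > 0" using u0 v by simp
  ultimately show ?thesis by (simp add: divide_le_eq)
qed

lemma big_point:
  fixes X Y D A B :: int
  assumes D: "D \<ge> 4*\<bar>A\<bar> + 4*\<bar>B\<bar> + 2" and curve: "Y^2 = X^3 + D^2*A*X + D^3*B"
    and hw: "weil_height (of_int X / of_int D) > 2 * ln (real_of_int D)"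
  shows "X > D^2" "Y^2 \<le> 2*X^3"
proof -
  have D0: "D \<noteq> 0" "D > 0" using D by auto
  have "weil_height (of_int X / of_int D) \<le> ln (real_of_int (max \<bar>X\<bar> \<bar>D\<bar>) / real_of_int 1)"
    by (rule wh_upper[OF D0(1)]) auto
  have XD: "\<bar>X\<bar> > D^2"
  proof (rule ccontr)
    assume "\<not> \<bar>X\<bar> > D^2"
    then have "max \<bar>X\<bar> \<bar>D\<bar> \<le> D^2" using D0 by (auto simp: power2_eq_square)
    then have "real_of_int (max \<bar>X\<bar> \<bar>D\<bar>) \<le> real_of_int D ^ 2" by (metis of_int_le_iff of_int_power)
    moreover have "max \<bar>X\<bar> \<bar>D\<bar> > 0" using D0 by auto
    ultimately have "ln (real_of_int (max \<bar>X\<bar> \<bar>D\<bar>)) \<le> ln (real_of_int D ^ 2)" by (intro ln_mono) auto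
    also have "\<dots> = 2 * ln (real_of_int D)" using D0 by (simp add: ln_realpow)
    finally show False using hw \<open>weil_height (of_int X / of_int D) \<le> _\<close> by simp
  qed
  have DD: "D \<le> D^2" using D0 by (simp add: power2_eq_square)
  have h1: "4*\<bar>A\<bar> \<le> D^2" using D DD by linarith
  have "D \<le> D^3" using D0 by (simp add: power3_eq_cube) (smt (verit) mult_le_cancel_left1 mult_pos_pos)
  then have h2: "4*\<bar>B\<bar> \<le> D^3" using D by linarith
  have X4: "D^4 \<le> X^2"
  proof -
    have "D^2 * D^2 \<le> \<bar>X\<bar> * \<bar>X\<bar>" using XD by (intro mult_mono) auto
    then show ?thesis by (simp add: power2_eq_square eval_nat_numeral)
  qed
  have X6: "D^6 \<le> \<bar>X\<bar>^3"
  proof -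
    have "D^2 * (D^2 * D^2) \<le> \<bar>X\<bar> * (\<bar>X\<bar> * \<bar>X\<bar>)" using XD by (intro mult_mono) auto
    then show ?thesis by (simp add: power2_eq_square eval_nat_numeral)
  qed
  have e1: "4*\<bar>D^2*A*X\<bar> \<le> \<bar>X\<bar>^3"
  proof -
    have "4*\<bar>D^2*A*X\<bar> = (4*\<bar>A\<bar>) * (D^2*\<bar>X\<bar>)" by (simp add: abs_mult)
    also have "\<dots> \<le> D^2 * (D^2*\<bar>X\<bar>)" using h1 by (intro mult_right_mono) auto
    also have "\<dots> = D^4 * \<bar>X\<bar>" by (simp add: eval_nat_numeral)
    also have "\<dots> \<le> X^2 * \<bar>X\<bar>" using X4 by (intro mult_right_mono) auto
    also have "\<dots> = \<bar>X\<bar>^3" by (simp add: eval_nat_numeral)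
    finally show ?thesis .
  qed
  have e2: "4*\<bar>D^3*B\<bar> \<le> \<bar>X\<bar>^3"
  proof -
    have "4*\<bar>D^3*B\<bar> = (4*\<bar>B\<bar>) * D^3" using D0 by (simp add: abs_mult)
    also have "\<dots> \<le> D^3 * D^3" using h2 D0 by (intro mult_right_mono) auto
    also have "\<dots> = D^6" by (simp add: eval_nat_numeral)
    finally show ?thesis using X6 by linarith
  qed
  have Xpos: "X > 0"
  proof (rule ccontr)
    assume "\<not> X > 0"
    then have "X^3 = - (\<bar>X\<bar>^3)" by (simp add: eval_nat_numeral)
    moreover have "\<bar>X\<bar>^3 > 0" using XD D0 by auto
    moreover have "Y^2 \<ge> 0" by simp
    ultimately show False using curve e1 e2 by linarith
  qed
  then have "\<bar>X\<bar> = X" by simp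
  then have "\<bar>X\<bar>^3 = X^3" by simp
  then show "Y^2 \<le> 2*X^3" using curve e1 e2 abs_ge_self[of "D^2*A*X"] abs_ge_self[of "D^3*B"] by linarith
  show "X > D^2" using XD \<open>\<bar>X\<bar> = X\<close> by simp
qed

lemma gdvdN:
  fixes g X Y X' Y' D A B :: int
  assumes gX: "g dvd X" and gD: "g dvd D" and c: "Y^2 = X^3 + D^2*A*X + D^3*B"
    and c': "Y'^2 = X'^3 + D^2*A*X' + D^3*B"
  shows "g dvd (Y'-Y)^2 - (X+X')*(X'-X)^2"
proof -
  have "g^3 dvd X^3" using gX by simp
  moreover have "g^3 dvd D^2*A*X"
  proof -
    have "g^2 dvd D^2" using gD by simp
    then have "g^2 * g dvd D^2 * X" using gX by (rule mult_dvd_mono)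
    then show ?thesis by (simp add: eval_nat_numeral mult.commute mult.left_commute dvd_mult)
  qed
  moreover have "g^3 dvd D^3*B" using gD by simp
  ultimately have "g^3 dvd Y^2" unfolding c by (intro dvd_add) auto
  then have "g^2 dvd Y^2" by (rule dvd_trans[rotated]) (simp add: eval_nat_numeral)
  then have gY: "g dvd Y" by simp
  have e: "(Y'-Y)^2 - (X+X')*(X'-X)^2 = D*(D*A*X' + D^2*B) + Y*(Y - 2*Y') + X*(X'^2 + X*X' - X^2)"
  proof -
    have "(Y'-Y)^2 - (X+X')*(X'-X)^2 = Y'^2 - X'^3 + Y*(Y - 2*Y') + X*(X'^2 + X*X' - X^2)"
      by algebra
    also have "Y'^2 - X'^3 = D*(D*A*X' + D^2*B)" unfolding c' by algebra
    finally show ?thesis .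
  qed
  show ?thesis unfolding e using gD gY gX by (intro dvd_add dvd_mult2) auto
qed

lemma sum_height:
  fixes X Y X' Y' D g N :: int
  assumes D: "D > 0" and XX: "X' \<le> X" "X' \<noteq> X" and X'D: "X' > D"
    and cY: "Y^2 \<le> 2*X^3" and cY': "Y'^2 \<le> 2*X'^3"
    and N: "N = (Y'-Y)^2 - (X+X')*(X'-X)^2"
    and g: "g > 0" "g dvd N" "g dvd D"
  shows "weil_height (of_int N / of_int (D*(X'-X)^2)) \<le> ln 10 + 3 * ln (real_of_int X) - ln (real_of_int g)"
proof -
  have X0: "X > 0" "X' > 0" using XX X'D D by auto
  have den0: "D*(X'-X)^2 \<noteq> 0" using D XX by auto
  have gden: "g dvd D*(X'-X)^2" using g by simp
  have w: "weil_height (of_int N / of_int (D*(X'-X)^2)) \<le> ln (real_of_int (max \<bar>N\<bar> \<bar>D*(X'-X)^2\<bar>) / real_of_int g)"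
    by (rule wh_upper[OF den0 g(1) g(2) gden])
  have X3: "X'^3 \<le> X^3" using XX X0 by (intro power_mono) auto
  have dX: "\<bar>X'-X\<bar> \<le> X" using XX X0 by auto
  have dX2: "(X'-X)^2 \<le> X^2"
  proof -
    have "\<bar>X'-X\<bar>^2 \<le> X^2" using dX by (intro power_mono) auto
    then show ?thesis by simp
  qed
  have t1: "(Y'-Y)^2 \<le> 8*X^3"
  proof -
    have "(Y'-Y)^2 \<le> 2*Y'^2 + 2*Y^2"
    proof -
      have "0 \<le> (Y'+Y)^2" by simp
      then show ?thesis by (simp add: power2_eq_square algebra_simps)
    qed
    then show ?thesis using cY cY' X3 by linarith
  qed
  have t2: "\<bar>(X+X')*(X'-X)^2\<bar> \<le> 2*X^3"
  proof -
    have "\<bar>(X+X')*(X'-X)^2\<bar> = (X+X')*(X'-X)^2" using X0 by (simp add: abs_mult)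
    also have "\<dots> \<le> (2*X)*X^2" using XX X0 dX2 by (intro mult_mono) auto
    finally show ?thesis by (simp add: eval_nat_numeral)
  qed
  have Nb: "\<bar>N\<bar> \<le> 10*X^3" unfolding N using t1 t2 by (smt (verit) zero_le_power2)
  have Db: "\<bar>D*(X'-X)^2\<bar> \<le> 10*X^3"
  proof -
    have "\<bar>D*(X'-X)^2\<bar> = D*(X'-X)^2" using D by (simp add: abs_mult)
    also have "\<dots> \<le> X*X^2" using dX2 D X'D XX by (intro mult_mono) auto
    finally show ?thesis using X0 by (simp add: eval_nat_numeral)
  qed
  have mb: "max \<bar>N\<bar> \<bar>D*(X'-X)^2\<bar> \<le> 10*X^3" using Nb Db by simp
  have "real_of_int (max \<bar>N\<bar> \<bar>D*(X'-X)^2\<bar>) / real_of_int g \<le> real_of_int (10*X^3) / real_of_int g"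
  proof -
    have "real_of_int (max \<bar>N\<bar> \<bar>D*(X'-X)^2\<bar>) \<le> real_of_int (10*X^3)" using mb by (simp only: of_int_le_iff)
    then show ?thesis using g by (intro divide_right_mono) auto
  qed
  moreover have "real_of_int (max \<bar>N\<bar> \<bar>D*(X'-X)^2\<bar>) / real_of_int g > 0" using den0 g
    by (simp add: less_max_iff_disj)
  ultimately have "ln (real_of_int (max \<bar>N\<bar> \<bar>D*(X'-X)^2\<bar>) / real_of_int g) \<le> ln (real_of_int (10*X^3) / real_of_int g)"
    by (intro ln_mono) auto
  also have "\<dots> = ln 10 + 3 * ln (real_of_int X) - ln (real_of_int g)"
    using X0 g by (simp add: ln_div ln_mult ln_realpow)
  finally show ?thesis using w by simp
qed

lemma x3_eq: fixes X X' Y Y' D :: rat assumes "X' - X \<noteq> 0" "D \<noteq> 0"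
  shows "(((Y'-Y)/(X'-X))^2 - X - X')/D = ((Y'-Y)^2 - (X+X')*(X'-X)^2) / (D*(X'-X)^2)"
  using assms by (simp add: field_simps power_divide)

lemma int_point_data:
  fixes D A B :: int
  assumes "integral_point (of_int (D^2*A)) (of_int (D^3*B)) P"
  obtains X Y where "P = Pt (of_int X) (of_int Y)" "Y^2 = X^3 + D^2*A*X + D^3*B"
    "on_curve (of_int (D^2*A)) (of_int (D^3*B)) P"
proof -
  obtain x y where P: "P = Pt x y" "x \<in> \<int>" "y \<in> \<int>" "on_curve (of_int (D^2*A)) (of_int (D^3*B)) P"
    using assms unfolding integral_point_def by blast
  obtain X where X: "x = of_int X" using P(2) Ints_cases by blast
  obtain Y where Y: "y = of_int Y" using P(3) Ints_cases by blast
  have "(rat_of_int Y)^2 = (rat_of_int X)^3 + rat_of_int (D^2*A) * rat_of_int X + rat_of_int (D^3*B)"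
    using P(4) by (simp add: P(1) X Y)
  then have "rat_of_int (Y^2) = rat_of_int (X^3 + D^2*A*X + D^3*B)" by simp
  then have "Y^2 = X^3 + D^2*A*X + D^3*B" by (simp only: of_int_eq_iff)
  then show ?thesis using that P X Y by blast
qed

lemma point_facts:
  fixes A B D X Y :: int and C0 :: real
  defines "a \<equiv> rat_of_int (D^2*A)" and "b \<equiv> rat_of_int (D^3*B)"
  assumes tate: "\<And>t. fE A B t \<noteq> 0 \<Longrightarrow> \<bar>weil_height (phi A B t) - 4*weil_height t\<bar> \<le> C0"
    and C0: "C0 \<ge> 0" and D: "D \<ge> 4*\<bar>A\<bar> + 4*\<bar>B\<bar> + 2" and lnD: "ln (real_of_int D) \<ge> C0/3 + 1"
    and curve: "Y^2 = X^3 + D^2*A*X + D^3*B" and oc: "on_curve a b (Pt (of_int X) (of_int Y))"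
    and hu: "20 * ln (real_of_int D) \<le> can_height a b (Pt (of_int X) (of_int Y))"
  shows "X > D^2" "Y^2 \<le> 2*X^3"
    "ln (real_of_int X) - ln (real_of_int (gcd X D)) \<le> can_height a b (Pt (of_int X) (of_int Y)) + C0/3"
proof -
  define u where "u = can_height a b (Pt (of_int X) (of_int Y))"
  have Dpos: "D > 0" using D by linarith
  have L0: "ln (real_of_int D) > 0" using lnD C0 by linarith
  have "u = 0 \<or> \<bar>u - weil_height (of_int X / of_int D)\<bar> \<le> C0/3"
    using canh(2)[of A B C0 D "of_int X" "of_int Y", OF tate C0 Dpos] oc by (simp add: u_def a_def b_def)
  moreover have "u > 0" using hu L0 unfolding u_def by linarith
  ultimately have uh: "\<bar>u - weil_height (of_int X / of_int D)\<bar> \<le> C0/3" by auto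
  have "weil_height (of_int X / of_int D) > 2 * ln (real_of_int D)"
    using uh hu lnD L0 unfolding u_def abs_le_iff by linarith
  from big_point[OF D curve this] show XD: "X > D^2" and "Y^2 \<le> 2*X^3" by auto
  have "D \<le> D^2" using Dpos by (simp add: power2_eq_square)
  then have XD': "X > D" using XD by linarith
  have "weil_height (of_int X / of_int D) = ln (real_of_int (max \<bar>X\<bar> \<bar>D\<bar>) / real_of_int (gcd X D))"
    using wh_frac[of D X] Dpos by simp
  also have "max \<bar>X\<bar> \<bar>D\<bar> = X" using XD' Dpos by simp
  also have "ln (real_of_int X / real_of_int (gcd X D)) = ln (real_of_int X) - ln (real_of_int (gcd X D))"
    using XD' Dpos by (simp add: ln_div)
  finally show "ln (real_of_int X) - ln (real_of_int (gcd X D)) \<le> can_height a b (Pt (of_int X) (of_int Y)) + C0/3"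
    using uh unfolding u_def abs_le_iff by linarith
qed

theorem lemma7p1:
  fixes A B :: int
  assumes "4 * A^3 + 27 * B^2 \<noteq> 0"
  shows "\<exists>D0::int. \<forall>D::int. squarefree D \<and> D \<ge> D0 \<longrightarrow>
    (let a = of_int (D^2 * A) :: rat; b = of_int (D^3 * B) :: rat in
     \<forall>P Q. integral_point a b P \<and> integral_point a b Q
       \<and> 20 * ln (real_of_int D) \<le> can_height a b P \<and> can_height a b P \<le> 2200 * ln (real_of_int D)
       \<and> 20 * ln (real_of_int D) \<le> can_height a b Q \<and> can_height a b Q \<le> 2200 * ln (real_of_int D)
       \<and> xcoord P \<noteq> xcoord Q
       \<and> max (can_height a b Q / can_height a b P) (can_height a b P / can_height a b Q) \<le> 11/10
       \<longrightarrow> cos_angle a b P Q \<le> 63/100)"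
proof -
  obtain C0 where C0: "C0 \<ge> 0" and tate: "\<And>t. fE A B t \<noteq> 0 \<Longrightarrow> \<bar>weil_height (phi A B t) - 4*weil_height t\<bar> \<le> C0"
    using tate_step[OF assms] by blast
  define c1 where "c1 = C0/3"
  define K where "K = 4*c1 + ln 10"
  define D0 where "D0 = \<lceil>exp (10*K + c1 + 1)\<rceil> + 4*\<bar>A\<bar> + 4*\<bar>B\<bar> + 2"
  show ?thesis
  proof (intro exI[of _ D0] allI impI)
    fix D :: int assume "squarefree D \<and> D \<ge> D0"
    then have DD0: "D \<ge> D0" by simp
    have c10: "c1 \<ge> 0" using C0 by (simp add: c1_def)
    have ce: "\<lceil>exp (10*K + c1 + 1)\<rceil> \<ge> 0" by (simp add: ceiling_le_zero) (smt (verit) exp_gt_zero)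
    have Dge: "D \<ge> 4*\<bar>A\<bar> + 4*\<bar>B\<bar> + 2" using DD0 ce unfolding D0_def by linarith
    have Dpos: "D > 0" using Dge by linarith
    have "exp (10*K + c1 + 1) \<le> real_of_int \<lceil>exp (10*K + c1 + 1)\<rceil>" by (rule le_of_int_ceiling)
    also have "\<dots> \<le> real_of_int D" using DD0 unfolding D0_def by linarith
    finally have "ln (exp (10*K + c1 + 1)) \<le> ln (real_of_int D)" by (intro ln_mono) auto
    then have lnD: "ln (real_of_int D) \<ge> 10*K + c1 + 1" by simp
    have K0: "K \<ge> 0" using c10 by (simp add: K_def)
    have lnD': "ln (real_of_int D) \<ge> C0/3 + 1" using lnD K0 by (simp add: c1_def)
    have L0: "ln (real_of_int D) > 0" using lnD K0 c10 by linarith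
    show "let a = of_int (D^2 * A) :: rat; b = of_int (D^3 * B) :: rat in
     \<forall>P Q. integral_point a b P \<and> integral_point a b Q
       \<and> 20 * ln (real_of_int D) \<le> can_height a b P \<and> can_height a b P \<le> 2200 * ln (real_of_int D)
       \<and> 20 * ln (real_of_int D) \<le> can_height a b Q \<and> can_height a b Q \<le> 2200 * ln (real_of_int D)
       \<and> xcoord P \<noteq> xcoord Q
       \<and> max (can_height a b Q / can_height a b P) (can_height a b P / can_height a b Q) \<le> 11/10
       \<longrightarrow> cos_angle a b P Q \<le> 63/100"
      unfolding Let_def
    proof (intro allI impI)
      fix P Q
      define a where "a = rat_of_int (D^2*A)"
      define b where "b = rat_of_int (D^3*B)"
      assume H: "integral_point (rat_of_int (D^2*A)) (rat_of_int (D^3*B)) P \<and> integral_point (rat_of_int (D^2*A)) (rat_of_int (D^3*B)) Q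
       \<and> 20 * ln (real_of_int D) \<le> can_height (rat_of_int (D^2*A)) (rat_of_int (D^3*B)) P \<and> can_height (rat_of_int (D^2*A)) (rat_of_int (D^3*B)) P \<le> 2200 * ln (real_of_int D)
       \<and> 20 * ln (real_of_int D) \<le> can_height (rat_of_int (D^2*A)) (rat_of_int (D^3*B)) Q \<and> can_height (rat_of_int (D^2*A)) (rat_of_int (D^3*B)) Q \<le> 2200 * ln (real_of_int D)
       \<and> xcoord P \<noteq> xcoord Q
       \<and> max (can_height (rat_of_int (D^2*A)) (rat_of_int (D^3*B)) Q / can_height (rat_of_int (D^2*A)) (rat_of_int (D^3*B)) P) (can_height (rat_of_int (D^2*A)) (rat_of_int (D^3*B)) P / can_height (rat_of_int (D^2*A)) (rat_of_int (D^3*B)) Q) \<le> 11/10"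
      then have H': "integral_point a b P" "integral_point a b Q"
        "20 * ln (real_of_int D) \<le> can_height a b P" "20 * ln (real_of_int D) \<le> can_height a b Q"
        "xcoord P \<noteq> xcoord Q" "max (can_height a b Q / can_height a b P) (can_height a b P / can_height a b Q) \<le> 11/10"
        unfolding a_def b_def by auto
      obtain X Y where P: "P = Pt (of_int X) (of_int Y)" and cP: "Y^2 = X^3 + D^2*A*X + D^3*B"
        and ocP: "on_curve a b P" using int_point_data[OF H'(1)[unfolded a_def b_def]] unfolding a_def b_def by blast
      obtain X' Y' where Q: "Q = Pt (of_int X') (of_int Y')" and cQ: "Y'^2 = X'^3 + D^2*A*X' + D^3*B"
        and ocQ: "on_curve a b Q" using int_point_data[OF H'(2)[unfolded a_def b_def]] unfolding a_def b_def by blast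
      define u where "u = can_height a b P"
      define v where "v = can_height a b Q"
      define S where "S = can_height a b (ec_add a b P Q)"
      have fP: "X > D^2" "Y^2 \<le> 2*X^3" "ln (real_of_int X) - ln (real_of_int (gcd X D)) \<le> u + C0/3"
        using point_facts[of A B C0 D Y X, OF tate C0 Dge lnD' cP] ocP H'(3) unfolding u_def P a_def b_def by auto
      have fQ: "X' > D^2" "Y'^2 \<le> 2*X'^3" "ln (real_of_int X') - ln (real_of_int (gcd X' D)) \<le> v + C0/3"
        using point_facts[of A B C0 D Y' X', OF tate C0 Dge lnD' cQ] ocQ H'(4) unfolding v_def Q a_def b_def by auto
      have XX: "X \<noteq> X'" using H'(5) by (simp add: P Q)
      have DD: "D \<le> D^2" using Dpos by (simp add: power2_eq_square)
      have u0: "u > 0" "v > 0" using H'(3,4) L0 unfolding u_def v_def by linarith+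
      have uv: "u \<le> 11/10 * v" "v \<le> 11/10 * u"
      proof -
        have "v / u \<le> 11/10 \<and> u / v \<le> 11/10" using H'(6) unfolding u_def v_def max.bounded_iff .
        then have "u / v \<le> 11/10" "v / u \<le> 11/10" by auto
        then show "u \<le> 11/10 * v" "v \<le> 11/10 * u" using u0 by (simp_all add: divide_le_eq)
      qed
      define l where "l = (rat_of_int Y' - rat_of_int Y) / (rat_of_int X' - rat_of_int X)"
      have cPr: "(rat_of_int Y)^2 = (rat_of_int X)^3 + a * rat_of_int X + b" using ocP by (simp add: P)
      have cQr: "(rat_of_int Y')^2 = (rat_of_int X')^3 + a * rat_of_int X' + b" using ocQ by (simp add: Q)
      have XXr: "rat_of_int X \<noteq> rat_of_int X'" using XX by simp
      have sumP: "ec_add a b P Q = Pt (l^2 - of_int X - of_int X') (l*(of_int X-(l^2-of_int X-of_int X'))-of_int Y)"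
        using add_pts(1)[OF cPr cQr XXr] by (simp add: P Q l_def)
      have ocS: "on_curve a b (Pt (l^2 - of_int X - of_int X') (l*(of_int X-(l^2-of_int X-of_int X'))-of_int Y))"
        using add_pts(2)[OF cPr cQr XXr] by (simp add: l_def)
      define N where "N = (Y'-Y)^2 - (X+X')*(X'-X)^2"
      have x3: "(l^2 - of_int X - of_int X') / of_int D = rat_of_int N / rat_of_int (D*(X'-X)^2)"
      proof -
        have d1: "rat_of_int X' - rat_of_int X \<noteq> 0" using XX by simp
        have d2: "rat_of_int D \<noteq> 0" using Dpos by simp
        show ?thesis unfolding l_def N_def using x3_eq[OF d1 d2, of "rat_of_int Y'" "rat_of_int Y"] by simp
      qed
      define x3 where "x3 = l^2 - of_int X - of_int X'"
      define y3 where "y3 = l*(of_int X-(l^2-of_int X-of_int X'))-of_int Y"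
      have SS: "S = can_height a b (Pt x3 y3)" unfolding S_def sumP x3_def y3_def ..
      have cs: "can_height a b (Pt x3 y3) \<le> weil_height (x3 / of_int D) + C0/3"
        using canh(1)[of A B C0 D x3 y3, OF tate C0 Dpos] ocS unfolding a_def b_def x3_def y3_def by blast
      have Sb: "S \<le> weil_height (rat_of_int N / rat_of_int (D*(X'-X)^2)) + c1"
        using cs x3 unfolding SS c1_def x3_def by simp
      have lng: "ln (real_of_int (gcd Z D)) \<le> ln (real_of_int D)" for Z
      proof -
        have "gcd Z D \<le> D" using Dpos by (intro zdvd_imp_le) auto
        moreover have "gcd Z D > 0" using Dpos by simp
        ultimately show ?thesis by (intro ln_mono) auto
      qed
      have cosd: "cos_angle a b P Q = (S - u - v) / (2 * sqrt (u * v))"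
        by (simp add: cos_angle_def S_def u_def v_def)
      show "cos_angle (rat_of_int (D^2*A)) (rat_of_int (D^3*B)) P Q \<le> 63/100"
        unfolding a_def[symmetric] b_def[symmetric] cosd
      proof (cases "X' \<le> X")
        case True
        have gN: "gcd X D dvd N" unfolding N_def by (rule gdvdN[OF _ _ cP cQ]) auto
        have "weil_height (rat_of_int N / rat_of_int (D*(X'-X)^2)) \<le> ln 10 + 3 * ln (real_of_int X) - ln (real_of_int (gcd X D))"
          by (rule sum_height[OF Dpos True XX[symmetric] _ fP(2) fQ(2) N_def]) (use fQ(1) DD Dpos gN in auto)
        then have "S \<le> 3*u + 2*ln (real_of_int D) + K"
          using Sb fP(3) lng[of X] unfolding K_def c1_def by linarith
        then show "(S - u - v) / (2 * sqrt (u * v)) \<le> 63/100"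
          by (rule final_ineq[OF H'(3)[folded u_def] L0 uv(1) u0(2)]) (use lnD c10 in linarith)
      next
        case False
        have gN: "gcd X' D dvd (Y-Y')^2 - (X'+X)*(X-X')^2" by (rule gdvdN[OF _ _ cQ cP]) auto
        have NN: "(Y-Y')^2 - (X'+X)*(X-X')^2 = N" unfolding N_def by algebra
        have DN: "D*(X-X')^2 = D*(X'-X)^2" by algebra
        have "weil_height (rat_of_int ((Y-Y')^2 - (X'+X)*(X-X')^2) / rat_of_int (D*(X-X')^2)) \<le> ln 10 + 3 * ln (real_of_int X') - ln (real_of_int (gcd X' D))"
          by (rule sum_height[OF Dpos _ XX _ fQ(2) fP(2) refl]) (use False fP(1) DD Dpos gN in auto)
        then have "weil_height (rat_of_int N / rat_of_int (D*(X'-X)^2)) \<le> ln 10 + 3 * ln (real_of_int X') - ln (real_of_int (gcd X' D))"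
          unfolding NN DN .
        then have "S \<le> 3*v + 2*ln (real_of_int D) + K"
          using Sb fQ(3) lng[of X'] unfolding K_def c1_def by linarith
        then have "(S - v - u) / (2 * sqrt (v * u)) \<le> 63/100"
          by (rule final_ineq[OF H'(4)[folded v_def] L0 uv(2) u0(1)]) (use lnD c10 in linarith)
        then show "(S - u - v) / (2 * sqrt (u * v)) \<le> 63/100" by (simp add: mult.commute add.commute diff_diff_eq)
      qed
    qed
  qed
qed

end
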